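(* For all $P,Q\in\Gamma_n$ ($n\ge2$), $$M_{SA}(P\|Q)\le \tfrac13 M_{SH}(P\|Q)\le \tfrac14\Delta(P\|Q)\le \tfrac12 M_{SG}(P\|Q)\le h(P\|Q),$$ and $$\xi_{SA}(P\|Q)\le \tfrac13\xi_{SH}(P\|Q)\le \tfrac14\xi_{\Delta}(P\|Q)\le \tfrac12\xi_{SG}(P\|Q)\le \xi_h(P\|Q).$$
   Context: $\Gamma_n=\{P=(p_1,\dots,p_n): p_i>0,\ \sum_i p_i=1\}$. For $f:(0,\infty)\to\mathbb{R}$, $C_f(P\|Q)=\sum_{i=1}^n q_i f(p_i/q_i)$; for differentiable $f$, $E_f(P\|Q)=\sum_{i=1}^n (p_i-q_i) f'(p_i/q_i)$ and $\xi_f(P\|Q)=E_f(P\|Q)-C_f(P\|Q)$. Define on $(0,\infty)$: $f_{SA}(x)=\sqrt{(x^2+1)/2}-\frac{x+1}{2}$, $f_{SG}(x)=\sqrt{(x^2+1)/2}-\sqrt{x}$, $f_{SH}(x)=\sqrt{(x^2+1)/2}-\frac{2x}{x+1}$, $f_h(x)=\frac12(\sqrt x-1)^2$, $f_\Delta(x)=\frac{(x-1)^2}{x+1}$. Then $M_{SA}=C_{f_{SA}}=\sum_i\sqrt{(p_i^2+q_i^2)/2}-1$, $M_{SG}=C_{f_{SG}}=\sum_i\big(\sqrt{(p_i^2+q_i^2)/2}-\sqrt{p_iq_i}\big)$, $M_{SH}=C_{f_{SH}}=\sum_i\big(\sqrt{(p_i^2+q_i^2)/2}-\frac{2p_iq_i}{p_i+q_i}\big)$,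 $h=C_{f_h}=\frac12\sum_i(\sqrt{p_i}-\sqrt{q_i})^2$, $\Delta=C_{f_\Delta}=\sum_i\frac{(p_i-q_i)^2}{p_i+q_i}$; and $\xi_{SA}=\xi_{f_{SA}}$, $\xi_{SG}=\xi_{f_{SG}}$, $\xi_{SH}=\xi_{f_{SH}}$, $\xi_h=\xi_{f_h}$, $\xi_\Delta=\xi_{f_\Delta}$. *)

theory Defs
  imports "HOL-Analysis.Analysis"
begin

definition Gamma :: "nat \<Rightarrow> (nat \<Rightarrow> real) set" where
  "Gamma n = {p. (\<forall>i<n. p i > 0) \<and> (\<Sum>i<n. p i) = 1}"

definition Cf :: "(real \<Rightarrow> real) \<Rightarrow> nat \<Rightarrow> (nat \<Rightarrow> real) \<Rightarrow> (nat \<Rightarrow> real) \<Rightarrow> real" where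
  "Cf f n p q = (\<Sum>i<n. q i * f (p i / q i))"

definition Ef :: "(real \<Rightarrow> real) \<Rightarrow> nat \<Rightarrow> (nat \<Rightarrow> real) \<Rightarrow> (nat \<Rightarrow> real) \<Rightarrow> real" where
  "Ef f n p q = (\<Sum>i<n. (p i - q i) * deriv f (p i / q i))"

definition xif :: "(real \<Rightarrow> real) \<Rightarrow> nat \<Rightarrow> (nat \<Rightarrow> real) \<Rightarrow> (nat \<Rightarrow> real) \<Rightarrow> real" where
  "xif f n p q = Ef f n p q - Cf f n p q"

definition f_SA :: "real \<Rightarrow> real" where
  "f_SA x = sqrt ((x^2 + 1) / 2) - (x + 1) / 2"
definition f_SG :: "real \<Rightarrow> real" where
  "f_SG x = sqrt ((x^2 + 1) / 2) - sqrt x"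
definition f_SH :: "real \<Rightarrow> real" where
  "f_SH x = sqrt ((x^2 + 1) / 2) - 2 * x / (x + 1)"
definition f_h :: "real \<Rightarrow> real" where
  "f_h x = (1/2) * (sqrt x - 1)^2"
definition f_Delta :: "real \<Rightarrow> real" where
  "f_Delta x = (x - 1)^2 / (x + 1)"

end

theory Submission
  imports Defs
begin

lemma sq_helper: fixes A B E :: real
  assumes "0 \<le> B" "2*B^2 - 2*A^2 = E" "0 \<le> E" shows "A \<le> B"
proof (rule power2_le_imp_le)
  show "A^2 \<le> B^2" using assms by linarith
qed (use assms in auto)

lemma P1: fixes r w :: real assumes r: "r>0" and w: "w>0" and w2: "w^2 = (r^4+1)/2"
  shows "4*(r^2+1)*w \<le> 3*r^4+2*r^2+3"
proof (rule sq_helper)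
  have a0: "2*w^2 = r^4+1" by (simp add: w2)
  have "2*(4*(r^2+1)*w)^2 = 16*(r^2+1)^2*(2*w^2)" by algebra
  with a0 have a: "2*(4*(r^2+1)*w)^2 = 16*(r^2+1)^2*(r^4+1)" by simp
  have b: "2*(3*r^4+2*r^2+3)^2 - 16*(r^2+1)^2*(r^4+1) = 2*(r^2-1)^4" by algebra
  from a b show "2*(3*r^4+2*r^2+3)^2 - 2*(4*(r^2+1)*w)^2 = 2*(r^2-1)^4" by linarith
  show "0 \<le> 2*(r^2-1)^4" by simp
  show "0 \<le> 3*r^4+2*r^2+3" by (simp add: add_nonneg_nonneg)
qed

lemma P3: fixes r w :: real assumes r: "r>0" and w: "w>0" and w2: "w^2 = (r^4+1)/2"
  shows "(r^2-1)^2 + 2*(r^2+1)*r \<le> 2*(r^2+1)*w"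
proof (rule sq_helper)
  have a0: "2*w^2 = r^4+1" by (simp add: w2)
  have "2*(2*(r^2+1)*w)^2 = 4*(r^2+1)^2*(2*w^2)" by algebra
  with a0 have a: "2*(2*(r^2+1)*w)^2 = 4*(r^2+1)^2*(r^4+1)" by simp
  have b: "4*(r^2+1)^2*(r^4+1) - 2*((r^2-1)^2 + 2*(r^2+1)*r)^2 = 2*((r-1)^6*(r+1)^2)" by algebra
  from a b show "2*(2*(r^2+1)*w)^2 - 2*((r^2-1)^2 + 2*(r^2+1)*r)^2 = 2*((r-1)^6*(r+1)^2)" by linarith
  show "0 \<le> 2*((r-1)^6*(r+1)^2)" by (simp add: zero_le_even_power)
  show "0 \<le> 2*(r^2+1)*w" using w by simp
qed

lemma P4: fixes r w :: real assumes r: "r>0" and w: "w>0" and w2: "w^2 = (r^4+1)/2"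
  shows "w \<le> r^2 - r + 1"
proof (rule sq_helper)
  have a: "2*w^2 = r^4+1" by (simp add: w2)
  have b: "2*(r^2 - r + 1)^2 - (r^4+1) = (r-1)^4" by algebra
  from a b show "2*(r^2 - r + 1)^2 - 2*w^2 = (r-1)^4" by linarith
  show "0 \<le> (r-1)^4" by simp
  have "r^2 - r + 1 = (r - 1/2)^2 + 3/4" by algebra
  moreover have "(r - 1/2)^2 \<ge> 0" by simp
  ultimately show "0 \<le> r^2 - r + 1" by linarith
qed

lemma Q1: fixes r w :: real assumes r: "r>0" and w: "w>0" and w2: "w^2 = (r^4+1)/2"
  shows "w*(r^4+6*r^2+1) \<le> (r^2+1)^3"
proof (rule sq_helper)
  have a: "2*(w*(r^4+6*r^2+1))^2 = (r^4+1)*(r^4+6*r^2+1)^2" by (simp add: power_mult_distrib w2)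
  have b: "2*((r^2+1)^3)^2 - (r^4+1)*(r^4+6*r^2+1)^2 = (r-1)^4 * (1 + 4*r + 10*r^2 + 20*r^3 + 26*r^4 + 20*r^5 + 10*r^6 + 4*r^7 + r^8)" by algebra
  from a b show "2*((r^2+1)^3)^2 - 2*(w*(r^4+6*r^2+1))^2 = (r-1)^4 * (1 + 4*r + 10*r^2 + 20*r^3 + 26*r^4 + 20*r^5 + 10*r^6 + 4*r^7 + r^8)" by linarith
  show "0 \<le> (r-1)^4 * (1 + 4*r + 10*r^2 + 20*r^3 + 26*r^4 + 20*r^5 + 10*r^6 + 4*r^7 + r^8)"
    using r by (intro mult_nonneg_nonneg) (simp_all add: add_nonneg_nonneg)
  show "0 \<le> (r^2+1)^3" by simp
qed

lemma Q3: fixes r w :: real assumes r: "r>0" and w: "w>0" and w2: "w^2 = (r^4+1)/2"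
  shows "r*(r^2+1)^3 \<le> w*((r^2+1)^3 - 2*r*(r^2-1)^2)"
proof (rule sq_helper)
  have a: "2*(w*((r^2+1)^3 - 2*r*(r^2-1)^2))^2 = (r^4+1)*((r^2+1)^3 - 2*r*(r^2-1)^2)^2" by (simp add: power_mult_distrib w2)
  have b: "(r^4+1)*((r^2+1)^3 - 2*r*(r^2-1)^2)^2 - 2*(r*(r^2+1)^3)^2 = (r-1)^6 * (1 + 2*r + 5*r^2 + 16*r^3 + 34*r^4 + 44*r^5 + 34*r^6 + 16*r^7 + 5*r^8 + 2*r^9 + r^10)" by algebra
  from a b show "2*(w*((r^2+1)^3 - 2*r*(r^2-1)^2))^2 - 2*(r*(r^2+1)^3)^2 = (r-1)^6 * (1 + 2*r + 5*r^2 + 16*r^3 + 34*r^4 + 44*r^5 + 34*r^6 + 16*r^7 + 5*r^8 + 2*r^9 + r^10)" by linarith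
  show "0 \<le> (r-1)^6 * (1 + 2*r + 5*r^2 + 16*r^3 + 34*r^4 + 44*r^5 + 34*r^6 + 16*r^7 + 5*r^8 + 2*r^9 + r^10)"
    using r by (intro mult_nonneg_nonneg) (simp_all add: add_nonneg_nonneg zero_le_even_power)
  have "(r^2+1)^2 - (r^2-1)^2 = 4*r^2" by algebra
  moreover have "4*r^2 \<ge> 0" by simp
  ultimately have ra: "(r^2-1)^2 \<le> (r^2+1)^2" by linarith
  have "(r-1)^2 \<ge> 0" by simp
  then have rb: "2*r \<le> r^2+1" by (simp add: power2_diff)
  have "2*r*(r^2-1)^2 \<le> (r^2+1)*(r^2+1)^2" using ra rb by (intro mult_mono) auto
  moreover have "(r^2+1)*(r^2+1)^2 = (r^2+1)^3" by algebra
  ultimately have "0 \<le> (r^2+1)^3 - 2*r*(r^2-1)^2" by linarith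
  then show "0 \<le> w*((r^2+1)^3 - 2*r*(r^2-1)^2)" using w by simp
qed

lemma Q4: fixes r w :: real assumes r: "r>0" and w: "w>0" and w2: "w^2 = (r^4+1)/2"
  shows "w*(4*r-r^2-1) \<le> r*(r^2+1)"
proof (cases "4*r-r^2-1 \<ge> 0")
  case False
  then have "w*(4*r-r^2-1) < 0" using w by (intro mult_pos_neg) auto
  moreover have "0 \<le> r*(r^2+1)" using r by simp
  ultimately show ?thesis by linarith
next
  case True
  show ?thesis
  proof (rule sq_helper)
    have a: "2*(w*(4*r-r^2-1))^2 = (r^4+1)*(4*r-r^2-1)^2" by (simp add: power_mult_distrib w2)
    have b: "2*(r*(r^2+1))^2 - (r^4+1)*(4*r-r^2-1)^2 = (r-1)^4*(-1 + 4*r + 6*r^2 + 4*r^3 - r^4)" by algebra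
    from a b show "2*(r*(r^2+1))^2 - 2*(w*(4*r-r^2-1))^2 = (r-1)^4*(-1 + 4*r + 6*r^2 + 4*r^3 - r^4)" by linarith
    have "r^2+1 \<le> 4*r" using True by simp
    then have "(r^2+1)^2 \<le> (4*r)^2" by (intro power_mono) auto
    moreover have "(r^2+1)^2 = r^4 + 2*r^2 + 1" "(4*r)^2 = 16*r^2" by algebra+
    ultimately have m: "r^4 + 1 \<le> 14*r^2" by linarith
    have "-1 + 4*r + 6*r^2 + 4*r^3 - r^4 = 4*r*(r-1)^2 + (14*r^2 - (r^4+1))" by algebra
    moreover have "4*r*(r-1)^2 \<ge> 0" using r by simp
    moreover have "(14*r^2 - (r^4+1)) \<ge> 0" using m by simp
    ultimately have "-1 + 4*r + 6*r^2 + 4*r^3 - r^4 \<ge> 0" by (metis add_nonneg_nonneg)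
    then show "0 \<le> (r-1)^4*(-1 + 4*r + 6*r^2 + 4*r^3 - r^4)" by simp
    show "0 \<le> r*(r^2+1)" using r by simp
  qed
qed

lemma d_SA: assumes "x>0" shows "deriv f_SA x = x/(2* sqrt((x^2+1)/2)) - 1/2"
proof -
  have pos: "0 < 1 + x^2" "0 < 1 + x*x" by (simp_all add: add_pos_nonneg)
  have "(f_SA has_real_derivative (x/(2* sqrt((x^2+1)/2)) - 1/2)) (at x)"
    unfolding f_SA_def[abs_def] using assms
    by (auto intro!: derivative_eq_intros simp: field_simps add_pos_pos) (use pos in linarith)+
  then show ?thesis by (rule DERIV_imp_deriv)
qed

lemma d_SG: assumes "x>0" shows "deriv f_SG x = x/(2* sqrt((x^2+1)/2)) - 1/(2* sqrt x)"
proof -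
  have pos: "0 < 1 + x^2" "0 < 1 + x*x" by (simp_all add: add_pos_nonneg)
  have "(f_SG has_real_derivative (x/(2* sqrt((x^2+1)/2)) - 1/(2* sqrt x))) (at x)"
    unfolding f_SG_def[abs_def] using assms
    by (auto intro!: derivative_eq_intros simp: field_simps add_pos_pos) (use pos in linarith)+
  then show ?thesis by (rule DERIV_imp_deriv)
qed

lemma d_SH: assumes "x>0" shows "deriv f_SH x = x/(2* sqrt((x^2+1)/2)) - 2/(x+1)^2"
proof -
  have pos: "0 < 1 + x^2" "0 < 1 + x*x" by (simp_all add: add_pos_nonneg)
  have "(f_SH has_real_derivative (x/(2* sqrt((x^2+1)/2)) - 2/(x+1)^2)) (at x)"
    unfolding f_SH_def[abs_def] using assms
    by (auto intro!: derivative_eq_intros simp: field_simps add_pos_pos power2_eq_square) (use pos in linarith)+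
  then show ?thesis by (rule DERIV_imp_deriv)
qed

lemma d_h: assumes "x>0" shows "deriv f_h x = (sqrt x - 1)/(2* sqrt x)"
proof -
  have "(f_h has_real_derivative ((sqrt x - 1)/(2* sqrt x))) (at x)"
    unfolding f_h_def[abs_def] using assms
    by (auto intro!: derivative_eq_intros simp: field_simps)
  then show ?thesis by (rule DERIV_imp_deriv)
qed

lemma d_D: assumes "x>0" shows "deriv f_Delta x = (x-1)*(x+3)/(x+1)^2"
proof -
  have "(f_Delta has_real_derivative ((x-1)*(x+3)/(x+1)^2)) (at x)"
    unfolding f_Delta_def[abs_def] using assms
    by (auto intro!: derivative_eq_intros simp: field_simps power2_eq_square) 
  then show ?thesis by (rule DERIV_imp_deriv)
qed

definition XX :: "(real \<Rightarrow> real) \<Rightarrow> real \<Rightarrow> real" where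
  "XX f x = (x-1) * deriv f x - f x"

lemma fin_helper: fixes A B A' B' N D :: real
  assumes "A = A'" "B = B'" "B' - A' = N / D" "0 \<le> N" "0 < D" shows "A \<le> B"
proof -
  have "0 \<le> N / D" using assms by simp
  then show ?thesis using assms by linarith
qed

context fixes r w :: real assumes r: "r > 0" and w_def: "w = sqrt ((r^4+1)/2)"
begin

lemma p4: "0 < r^4+1" proof - have "r^4 > 0" using r by simp then show ?thesis by linarith qed
lemma nz: "r^2+1 \<noteq> 0" "1+r^2 \<noteq> 0" proof - have "r^2 > 0" using r by simp then show "r^2+1 \<noteq> 0" "1+r^2 \<noteq> 0" by linarith+ qed
lemma w_pos: "w > 0" unfolding w_def using p4 by simp
lemma w2: "w^2 = (r^4+1)/2" unfolding w_def using p4 by simp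
lemma w2': "2*w^2 = r^4+1" using w2 by simp
lemma sw: "sqrt (((r^2)^2+1)/2) = w" unfolding w_def by (simp add: power_mult[symmetric])
lemma sw4: "sqrt ((r^4+1)/2) = w" by (rule w_def[symmetric])
lemma num_inv: "2 * inverse (2::real) = 1" "3 * inverse (3::real) = 1" "4 * inverse (4::real) = 1" "6 * inverse (6::real) = 1" "12 * inverse (12::real) = 1" by simp_all
lemma pa: "0 < r^2+1" using r by (simp add: add_pos_nonneg)
lemma hu: "w * inverse w = 1" using w_pos by simp
lemma hv: "(r^2+1) * inverse (r^2+1) = 1" using nz by simp
lemma hr: "r * inverse r = 1" using r by simp
lemma sr: "sqrt (r^2) = r" using r by simp
lemma ar: "abs r = r" using r by simp

lemma vSA: "f_SA (r^2) = w - (r^2+1)/2" by (simp add: f_SA_def sw sw4)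
lemma vSG: "f_SG (r^2) = w - r" by (simp add: f_SG_def sw sw4 ar)
lemma vSH: "f_SH (r^2) = w - 2*r^2/(r^2+1)" by (simp add: f_SH_def sw sw4)
lemma vh: "f_h (r^2) = (r-1)^2/2" by (simp add: f_h_def ar)
lemma vD: "f_Delta (r^2) = (r^2-1)^2/(r^2+1)" by (simp add: f_Delta_def)

lemma XSA: "XX f_SA (r^2) = 1 - (r^2+1)/(2*w)"
proof -
  have "XX f_SA (r^2) = (r^2-1)*(r^2/(2*w) - 1/2) - (w - (r^2+1)/2)"
    using r by (simp add: XX_def d_SA sw sw4 vSA)
  also have "\<dots> = 1 - (r^2+1)/(2*w)"
    using w_pos w2' by (simp add: field_simps) algebra
  finally show ?thesis .
qed

lemma XSG: "XX f_SG (r^2) = (r^2+1)/2*(1/r - 1/w)"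
proof -
  have "XX f_SG (r^2) = (r^2-1)*(r^2/(2*w) - 1/(2*r)) - (w - r)"
    using r by (simp add: XX_def d_SG sw sw4 sr vSG)
  also have "\<dots> = (r^2+1)/2*(1/r - 1/w)"
    unfolding divide_inverse inverse_mult_distrib using hu hr w2' by algebra
  finally show ?thesis .
qed

lemma XSH: "XX f_SH (r^2) = 2*(r^4+1)/(r^2+1)^2 - (r^2+1)/(2*w)"
proof -
  have "XX f_SH (r^2) = (r^2-1)*(r^2/(2*w) - 2/(r^2+1)^2) - (w - 2*r^2/(r^2+1))"
    using r by (simp add: XX_def d_SH sw sw4 vSH)
  also have "\<dots> = 2*(r^4+1)/(r^2+1)^2 - (r^2+1)/(2*w)"
    unfolding divide_inverse power_inverse[symmetric] inverse_mult_distrib using hu hv w2' by algebra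
  finally show ?thesis .
qed

lemma Xh: "XX f_h (r^2) = (r-1)^2/(2*r)"
proof -
  have "XX f_h (r^2) = (r^2-1)*((r - 1)/(2*r)) - (r-1)^2/2"
    using r by (simp add: XX_def d_h sr vh)
  also have "\<dots> = (r-1)^2/(2*r)"
    using r by (simp add: field_simps) algebra
  finally show ?thesis .
qed

lemma XD: "XX f_Delta (r^2) = 2*(r^2-1)^2/(r^2+1)^2"
proof -
  have "XX f_Delta (r^2) = (r^2-1)*((r^2-1)*(r^2+3)/(r^2+1)^2) - (r^2-1)^2/(r^2+1)"
    using r by (simp add: XX_def d_D vD)
  also have "\<dots> = 2*(r^2-1)^2/(r^2+1)^2"
  proof -
    have e1: "(r^2-1)*((r^2-1)*(r^2+3)/(r^2+1)^2) = (r^2-1)^2*(r^2+3)/(r^2+1)^2" by (simp add: power2_eq_square)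
    have e2: "(r^2-1)^2/(r^2+1) = (r^2-1)^2*(r^2+1)/(r^2+1)^2" using nz by (simp add: power2_eq_square)
    have e3: "(r^2-1)^2*(r^2+3)/(r^2+1)^2 - (r^2-1)^2*(r^2+1)/(r^2+1)^2 = ((r^2-1)^2*(r^2+3) - (r^2-1)^2*(r^2+1))/(r^2+1)^2" by (rule diff_divide_distrib[symmetric])
    have e4: "(r^2-1)^2*(r^2+3) - (r^2-1)^2*(r^2+1) = 2*(r^2-1)^2" by algebra
    show ?thesis unfolding e1 e2 e3 e4 ..
  qed
  finally show ?thesis .
qed

lemma C1: "f_SA (r^2) \<le> 1/3 * f_SH (r^2)"
proof (rule fin_helper)
  show "(1/3*(w - 2*r^2/(r^2+1)) - (w - (r^2+1)/2)) = (3*r^4+2*r^2+3 - 4*(r^2+1)*w) / (6*(r^2+1))"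
    using r w_pos pa nz by (simp add: divide_simps, (algebra)?)
  show "0 \<le> 3*r^4+2*r^2+3 - 4*(r^2+1)*w" using P1[OF r w_pos w2] by linarith
  show "0 < 6*(r^2+1)" using r w_pos pa by (intro mult_pos_pos zero_less_power) simp_all
qed (simp_all only: vSA vSH)

lemma C2: "1/3 * f_SH (r^2) \<le> 1/4 * f_Delta (r^2)"
proof (rule fin_helper)
  show "(1/4*((r^2-1)^2/(r^2+1)) - 1/3*(w - 2*r^2/(r^2+1))) = (3*r^4+2*r^2+3 - 4*(r^2+1)*w) / (12*(r^2+1))"
    using r w_pos pa nz by (simp add: divide_simps, (algebra)?)
  show "0 \<le> 3*r^4+2*r^2+3 - 4*(r^2+1)*w" using P1[OF r w_pos w2] by linarith
  show "0 < 12*(r^2+1)" using r w_pos pa by (intro mult_pos_pos zero_less_power) simp_all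
qed (simp_all only: vSH vD)

lemma C3: "1/4 * f_Delta (r^2) \<le> 1/2 * f_SG (r^2)"
proof (rule fin_helper)
  show "(1/2*(w - r) - 1/4*((r^2-1)^2/(r^2+1))) = (2*(r^2+1)*w - ((r^2-1)^2 + 2*(r^2+1)*r)) / (4*(r^2+1))"
    using r w_pos pa nz by (simp add: divide_simps, (algebra)?)
  show "0 \<le> 2*(r^2+1)*w - ((r^2-1)^2 + 2*(r^2+1)*r)" using P3[OF r w_pos w2] by linarith
  show "0 < 4*(r^2+1)" using r w_pos pa by (intro mult_pos_pos zero_less_power) simp_all
qed (simp_all only: vD vSG)

lemma C4: "1/2 * f_SG (r^2) \<le> f_h (r^2)"
proof (rule fin_helper)
  show "((r-1)^2/2 - 1/2*(w - r)) = (r^2 - r + 1 - w) / (2::real)"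
    using r w_pos pa nz by (simp add: divide_simps, (algebra)?)
  show "0 \<le> r^2 - r + 1 - w" using P4[OF r w_pos w2] by linarith
  show "0 < (2::real)" by simp
qed (simp_all only: vSG vh)

lemma X1: "XX f_SA (r^2) \<le> 1/3 * XX f_SH (r^2)"
proof (rule fin_helper)
  show "(1/3*(2*(r^4+1)/(r^2+1)^2 - (r^2+1)/(2*w)) - (1 - (r^2+1)/(2*w))) = ((r^2+1)^3 - w*(r^4+6*r^2+1)) / (3*w*(r^2+1)^2)"
    using r w_pos pa nz by (simp add: divide_simps, (algebra)?)
  show "0 \<le> (r^2+1)^3 - w*(r^4+6*r^2+1)" using Q1[OF r w_pos w2] by linarith
  show "0 < 3*w*(r^2+1)^2" using r w_pos pa by (intro mult_pos_pos zero_less_power) simp_all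
qed (simp_all only: XSA XSH)

lemma X2: "1/3 * XX f_SH (r^2) \<le> 1/4 * XX f_Delta (r^2)"
proof (rule fin_helper)
  show "(1/4*(2*(r^2-1)^2/(r^2+1)^2) - 1/3*(2*(r^4+1)/(r^2+1)^2 - (r^2+1)/(2*w))) = ((r^2+1)^3 - w*(r^4+6*r^2+1)) / (6*w*(r^2+1)^2)"
    using r w_pos pa nz by (simp add: divide_simps, (algebra)?)
  show "0 \<le> (r^2+1)^3 - w*(r^4+6*r^2+1)" using Q1[OF r w_pos w2] by linarith
  show "0 < 6*w*(r^2+1)^2" using r w_pos pa by (intro mult_pos_pos zero_less_power) simp_all
qed (simp_all only: XSH XD)

lemma X3: "1/4 * XX f_Delta (r^2) \<le> 1/2 * XX f_SG (r^2)"
proof (rule fin_helper)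
  show "(1/2*((r^2+1)/2*(1/r - 1/w)) - 1/4*(2*(r^2-1)^2/(r^2+1)^2)) = (w*((r^2+1)^3 - 2*r*(r^2-1)^2) - r*(r^2+1)^3) / (4*r*w*(r^2+1)^2)"
    using r w_pos pa nz by (simp add: divide_simps, (algebra)?)
  show "0 \<le> w*((r^2+1)^3 - 2*r*(r^2-1)^2) - r*(r^2+1)^3" using Q3[OF r w_pos w2] by linarith
  show "0 < 4*r*w*(r^2+1)^2" using r w_pos pa by (intro mult_pos_pos zero_less_power) simp_all
qed (simp_all only: XD XSG)

lemma X4: "1/2 * XX f_SG (r^2) \<le> XX f_h (r^2)"
proof (rule fin_helper)
  show "((r-1)^2/(2*r) - 1/2*((r^2+1)/2*(1/r - 1/w))) = (r*(r^2+1) - w*(4*r-r^2-1)) / (4*r*w)"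
    using r w_pos pa nz by (simp add: divide_simps, (algebra)?)
  show "0 \<le> r*(r^2+1) - w*(4*r-r^2-1)" using Q4[OF r w_pos w2] by linarith
  show "0 < 4*r*w" using r w_pos pa by (intro mult_pos_pos zero_less_power) simp_all
qed (simp_all only: XSG Xh)

end

lemma Cf_mono:
  assumes p: "\<forall>i<n. p i > 0" and q: "\<forall>i<n. q i > 0"
    and h: "\<And>x. x > 0 \<Longrightarrow> a * F x \<le> b * G x"
  shows "a * Cf F n p q \<le> b * Cf G n p q"
proof -
  have "a * Cf F n p q = (\<Sum>i<n. q i * (a * F (p i / q i)))"
    unfolding Cf_def sum_distrib_left by (simp add: algebra_simps)
  also have "\<dots> \<le> (\<Sum>i<n. q i * (b * G (p i / q i)))"
  proof (rule sum_mono)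
    fix i assume "i \<in> {..<n}"
    then have "p i > 0" "q i > 0" using p q by auto
    then show "q i * (a * F (p i / q i)) \<le> q i * (b * G (p i / q i))"
      by (intro mult_left_mono h) auto
  qed
  also have "\<dots> = b * Cf G n p q"
    unfolding Cf_def sum_distrib_left by (simp add: algebra_simps)
  finally show ?thesis .
qed

lemma xif_eq:
  assumes q: "\<forall>i<n. q i > 0"
  shows "xif f n p q = (\<Sum>i<n. q i * XX f (p i / q i))"
proof -
  have "xif f n p q = (\<Sum>i<n. (p i - q i) * deriv f (p i / q i) - q i * f (p i / q i))"
    unfolding xif_def Ef_def Cf_def by (simp add: sum_subtractf)
  also have "\<dots> = (\<Sum>i<n. q i * XX f (p i / q i))"
  proof (rule sum.cong)
    fix i assume "i \<in> {..<n}"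
    then have "q i > 0" using q by auto
    then show "(p i - q i) * deriv f (p i / q i) - q i * f (p i / q i) = q i * XX f (p i / q i)"
      unfolding XX_def by (simp add: field_simps)
  qed simp
  finally show ?thesis .
qed

lemma xif_mono:
  assumes p: "\<forall>i<n. p i > 0" and q: "\<forall>i<n. q i > 0"
    and h: "\<And>x. x > 0 \<Longrightarrow> a * XX F x \<le> b * XX G x"
  shows "a * xif F n p q \<le> b * xif G n p q"
proof -
  have "a * xif F n p q = (\<Sum>i<n. q i * (a * XX F (p i / q i)))"
    unfolding xif_eq[OF q] sum_distrib_left by (simp add: algebra_simps)
  also have "\<dots> \<le> (\<Sum>i<n. q i * (b * XX G (p i / q i)))"
  proof (rule sum_mono)
    fix i assume "i \<in> {..<n}"
    then have "p i > 0" "q i > 0" using p q by auto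
    then show "q i * (a * XX F (p i / q i)) \<le> q i * (b * XX G (p i / q i))"
      by (intro mult_left_mono h) auto
  qed
  also have "\<dots> = b * xif G n p q"
    unfolding xif_eq[OF q] sum_distrib_left by (simp add: algebra_simps)
  finally show ?thesis .
qed

lemma ptw:
  fixes x :: real assumes x: "x > 0"
  shows "1 * f_SA x \<le> 1/3 * f_SH x" "1/3 * f_SH x \<le> 1/4 * f_Delta x"
    "1/4 * f_Delta x \<le> 1/2 * f_SG x" "1/2 * f_SG x \<le> 1 * f_h x"
    "1 * XX f_SA x \<le> 1/3 * XX f_SH x" "1/3 * XX f_SH x \<le> 1/4 * XX f_Delta x"
    "1/4 * XX f_Delta x \<le> 1/2 * XX f_SG x" "1/2 * XX f_SG x \<le> 1 * XX f_h x"
proof -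
  have r: "sqrt x > 0" using x by simp
  have xe: "(sqrt x)^2 = x" using x by simp
  note L = C1[OF r refl] C2[OF r refl] C3[OF r refl] C4[OF r refl]
           X1[OF r refl] X2[OF r refl] X3[OF r refl] X4[OF r refl]
  show "1 * f_SA x \<le> 1/3 * f_SH x" "1/3 * f_SH x \<le> 1/4 * f_Delta x"
    "1/4 * f_Delta x \<le> 1/2 * f_SG x" "1/2 * f_SG x \<le> 1 * f_h x"
    "1 * XX f_SA x \<le> 1/3 * XX f_SH x" "1/3 * XX f_SH x \<le> 1/4 * XX f_Delta x"
    "1/4 * XX f_Delta x \<le> 1/2 * XX f_SG x" "1/2 * XX f_SG x \<le> 1 * XX f_h x"
    using L unfolding xe by simp_all
qed

theorem theorem5p1:
  fixes n :: nat and p q :: "nat \<Rightarrow> real"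
  assumes "n \<ge> 2" and "p \<in> Gamma n" and "q \<in> Gamma n"
  shows "Cf f_SA n p q \<le> (1/3) * Cf f_SH n p q
       \<and> (1/3) * Cf f_SH n p q \<le> (1/4) * Cf f_Delta n p q
       \<and> (1/4) * Cf f_Delta n p q \<le> (1/2) * Cf f_SG n p q
       \<and> (1/2) * Cf f_SG n p q \<le> Cf f_h n p q
       \<and> xif f_SA n p q \<le> (1/3) * xif f_SH n p q
       \<and> (1/3) * xif f_SH n p q \<le> (1/4) * xif f_Delta n p q
       \<and> (1/4) * xif f_Delta n p q \<le> (1/2) * xif f_SG n p q
       \<and> (1/2) * xif f_SG n p q \<le> xif f_h n p q"
proof -
  have p: "\<forall>i<n. p i > 0" and q: "\<forall>i<n. q i > 0" using assms(2,3) unfolding Gamma_def by auto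
  note C = Cf_mono[OF p q] and X = xif_mono[OF p q]
  have 1: "1 * Cf f_SA n p q \<le> (1/3) * Cf f_SH n p q" by (rule C) (rule ptw)
  have 2: "(1/3) * Cf f_SH n p q \<le> (1/4) * Cf f_Delta n p q" by (rule C) (rule ptw)
  have 3: "(1/4) * Cf f_Delta n p q \<le> (1/2) * Cf f_SG n p q" by (rule C) (rule ptw)
  have 4: "(1/2) * Cf f_SG n p q \<le> 1 * Cf f_h n p q" by (rule C) (rule ptw)
  have 5: "1 * xif f_SA n p q \<le> (1/3) * xif f_SH n p q" by (rule X) (rule ptw)
  have 6: "(1/3) * xif f_SH n p q \<le> (1/4) * xif f_Delta n p q" by (rule X) (rule ptw)
  have 7: "(1/4) * xif f_Delta n p q \<le> (1/2) * xif f_SG n p q" by (rule X) (rule ptw)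
  have 8: "(1/2) * xif f_SG n p q \<le> 1 * xif f_h n p q" by (rule X) (rule ptw)
  show ?thesis using 1 2 3 4 5 6 7 8 by simp
qed

end
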